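(* Let $K$ be a precubical set. For any $p$-cube $x$ of $\omega\mathcal{L}(K)$ with $p\geq0$, there exist a $p$-cube $y$ of $K\subset\omega\mathcal{L}(K)$ and a map $\mu\in\widehat{\square}([p],[p])$ such that $x=\mu^*(y)$, where $\mu^*:\mathcal{L}(K)_p\to\mathcal{L}(K)_p$ is the image of $\mu$ under the presheaf $\mathcal{L}(K)$.
   Context: $[0]=\{()\}$, $[n]=\{0,1\}^n$ ($n\ge1$) with the product order. Face maps $\delta_i^\alpha:[n-1]\to[n]$ insert $\alpha\in\{0,1\}$ at position $i$; $\square$ is the category with objects $[n]$, $n\ge0$, generated by face maps; its presheaves are precubical sets. A map $[m]\to[n]$ is adjacency-preserving if strictly increasing and it sends pairs at Hamming distance $1$ to pairs at Hamming distance $1$; $\widehat\square$ is the category with objects $[n]$ and all adjacency-preserving maps (it contains $\square$); its presheaves are transverse symmetric precubical sets. $\omega$ is the restriction functor along $\square\subset\widehat\square$ and $\mathcal L$ its left adjoint. The unit $K\to\omega\mathcal L(K)$ is an injective map of presheaves, through which $K$ is regarded as a subobject of $\omega\mathcal L(K)$; $\omega\mathcal L(K)_p=\mathcal L(K)_p$. *)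

theory Defs
  imports Main "HOL-Library.FuncSet"
begin

section \<open>The cubes [n] = {0,1}^n as bool lists of length n\<close>

definition cube :: "nat \<Rightarrow> bool list set" where
  "cube n = {xs. length xs = n}"

definition cle :: "bool list \<Rightarrow> bool list \<Rightarrow> bool" where
  "cle xs ys \<longleftrightarrow> list_all2 (\<le>) xs ys"

definition cless :: "bool list \<Rightarrow> bool list \<Rightarrow> bool" where
  "cless xs ys \<longleftrightarrow> cle xs ys \<and> xs \<noteq> ys"

definition adjacent :: "bool list \<Rightarrow> bool list \<Rightarrow> bool" where
  "adjacent xs ys \<longleftrightarrow> length xs = length ys \<and>
     card {i. i < length xs \<and> xs ! i \<noteq> ys ! i} = 1"

section \<open>Morphisms (as extensional functions on [m])\<close>

definition idc :: "nat \<Rightarrow> bool list \<Rightarrow> bool list" where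
  "idc n = restrict id (cube n)"

definition compc :: "nat \<Rightarrow> (bool list \<Rightarrow> bool list) \<Rightarrow> (bool list \<Rightarrow> bool list) \<Rightarrow> bool list \<Rightarrow> bool list" where
  "compc l g f = restrict (g \<circ> f) (cube l)"

text \<open>Face map delta_i^alpha : [n] -> [n+1] inserting alpha at position i (0-based, i \<le> n).\<close>
definition face :: "nat \<Rightarrow> nat \<Rightarrow> bool \<Rightarrow> bool list \<Rightarrow> bool list" where
  "face n i \<alpha> = restrict (\<lambda>xs. take i xs @ [\<alpha>] @ drop i xs) (cube n)"

text \<open>The category \<box>: morphisms [m] -> [n] generated by face maps (and identities).\<close>
inductive is_box_hom :: "nat \<Rightarrow> nat \<Rightarrow> (bool list \<Rightarrow> bool list) \<Rightarrow> bool" where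
  "is_box_hom n n (idc n)"
| "i \<le> m \<Longrightarrow> is_box_hom m (Suc m) (face m i \<alpha>)"
| "is_box_hom m k f \<Longrightarrow> is_box_hom k n g \<Longrightarrow> is_box_hom m n (compc m g f)"

definition box_hom :: "nat \<Rightarrow> nat \<Rightarrow> (bool list \<Rightarrow> bool list) set" where
  "box_hom m n = {f. is_box_hom m n f}"

text \<open>The category \<box>-hat: all adjacency-preserving maps [m] -> [n].\<close>
definition ahom :: "nat \<Rightarrow> nat \<Rightarrow> (bool list \<Rightarrow> bool list) set" where
  "ahom m n = {f \<in> cube m \<rightarrow>\<^sub>E cube n.
      (\<forall>x\<in>cube m. \<forall>y\<in>cube m. cless x y \<longrightarrow> cless (f x) (f y)) \<and>
      (\<forall>x\<in>cube m. \<forall>y\<in>cube m. adjacent x y \<longrightarrow> adjacent (f x) (f y))}"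

text \<open>A precubical set is given by the sets of n-cubes C n and, for every
  \<box>-morphism f : [m] -> [n], the map act m n f : C n -> C m.\<close>
definition precubical :: "(nat \<Rightarrow> 'a set) \<Rightarrow> (nat \<Rightarrow> nat \<Rightarrow> (bool list \<Rightarrow> bool list) \<Rightarrow> 'a \<Rightarrow> 'a) \<Rightarrow> bool" where
  "precubical C act \<longleftrightarrow>
     (\<forall>m n f x. f \<in> box_hom m n \<longrightarrow> x \<in> C n \<longrightarrow> act m n f x \<in> C m) \<and>
     (\<forall>n x. x \<in> C n \<longrightarrow> act n n (idc n) x = x) \<and>
     (\<forall>l m n f g x. f \<in> box_hom l m \<longrightarrow> g \<in> box_hom m n \<longrightarrow> x \<in> C n \<longrightarrow>
        act l n (compc l g f) x = act l m f (act m n g x))"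

text \<open>L(K)_p = (\<Sum>n. K_n \<times> \<box>-hat([p],[n])) / ~ , where
  (m, f^* k, g) ~ (n, k, f \<circ> g) for f \<in> \<box>([m],[n]).\<close>
definition Lpre :: "(nat \<Rightarrow> 'a set) \<Rightarrow> nat \<Rightarrow> (nat \<times> 'a \<times> (bool list \<Rightarrow> bool list)) set" where
  "Lpre C p = {(n, k, g). k \<in> C n \<and> g \<in> ahom p n}"

definition Lstep :: "(nat \<Rightarrow> 'a set) \<Rightarrow> (nat \<Rightarrow> nat \<Rightarrow> (bool list \<Rightarrow> bool list) \<Rightarrow> 'a \<Rightarrow> 'a) \<Rightarrow> nat
    \<Rightarrow> ((nat \<times> 'a \<times> (bool list \<Rightarrow> bool list)) \<times> (nat \<times> 'a \<times> (bool list \<Rightarrow> bool list))) set" where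
  "Lstep C act p = {((m, act m n f k, g), (n, k, compc p f g)) | m n f k g.
      f \<in> box_hom m n \<and> k \<in> C n \<and> g \<in> ahom p m}"

definition Lequiv :: "(nat \<Rightarrow> 'a set) \<Rightarrow> (nat \<Rightarrow> nat \<Rightarrow> (bool list \<Rightarrow> bool list) \<Rightarrow> 'a \<Rightarrow> 'a) \<Rightarrow> nat
    \<Rightarrow> ((nat \<times> 'a \<times> (bool list \<Rightarrow> bool list)) \<times> (nat \<times> 'a \<times> (bool list \<Rightarrow> bool list))) set" where
  "Lequiv C act p = Id_on (Lpre C p) \<union> (Lstep C act p \<union> (Lstep C act p)\<inverse>)\<^sup>+"

definition Lcells :: "(nat \<Rightarrow> 'a set) \<Rightarrow> (nat \<Rightarrow> nat \<Rightarrow> (bool list \<Rightarrow> bool list) \<Rightarrow> 'a \<Rightarrow> 'a) \<Rightarrow> nat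
    \<Rightarrow> (nat \<times> 'a \<times> (bool list \<Rightarrow> bool list)) set set" where
  "Lcells C act p = Lpre C p // Lequiv C act p"

text \<open>Action mu^* : L(K)_p -> L(K)_q of mu \<in> \<box>-hat([q],[p]): [(n,k,g)] |-> [(n,k,g \<circ> mu)].\<close>
definition Lmap :: "(nat \<Rightarrow> 'a set) \<Rightarrow> (nat \<Rightarrow> nat \<Rightarrow> (bool list \<Rightarrow> bool list) \<Rightarrow> 'a \<Rightarrow> 'a) \<Rightarrow> nat \<Rightarrow> nat
    \<Rightarrow> (bool list \<Rightarrow> bool list) \<Rightarrow> (nat \<times> 'a \<times> (bool list \<Rightarrow> bool list)) set
    \<Rightarrow> (nat \<times> 'a \<times> (bool list \<Rightarrow> bool list)) set" where
  "Lmap C act q p \<mu> X = (\<Union>(n, k, g)\<in>X. Lequiv C act q `` {(n, k, compc q g \<mu>)})"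

text \<open>The unit K -> \<omega>L(K): y |-> [(p, y, id)].\<close>
definition Lunit :: "(nat \<Rightarrow> 'a set) \<Rightarrow> (nat \<Rightarrow> nat \<Rightarrow> (bool list \<Rightarrow> bool list) \<Rightarrow> 'a \<Rightarrow> 'a) \<Rightarrow> nat
    \<Rightarrow> 'a \<Rightarrow> (nat \<times> 'a \<times> (bool list \<Rightarrow> bool list)) set" where
  "Lunit C act p y = Lequiv C act p `` {(p, y, idc p)}"

end

theory Submission
  imports Defs
begin

fun hdist :: "bool list \<Rightarrow> bool list \<Rightarrow> nat" where
  "hdist (x#xs) (y#ys) = (if x = y then 0 else 1) + hdist xs ys"
| "hdist _ _ = 0"

definition ntrue :: "bool list \<Rightarrow> nat" where "ntrue xs = length (filter id xs)"

lemma set_Suc_split: "{i. i < Suc n \<and> P i} = (if P 0 then {0} else {}) \<union> Suc ` {i. i < n \<and> P (Suc i)}"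
  by (auto simp: image_iff less_Suc_eq_0_disj)

lemma card_diff: "length xs = length ys \<Longrightarrow> card {i. i < length xs \<and> xs ! i \<noteq> ys ! i} = hdist xs ys"
proof (induction xs ys rule: list_induct2)
  case Nil then show ?case by simp
next
  case (Cons x xs y ys)
  have e: "{i. i < length (x#xs) \<and> (x#xs) ! i \<noteq> (y#ys) ! i} =
     (if x \<noteq> y then {0} else {}) \<union> Suc ` {i. i < length xs \<and> xs ! i \<noteq> ys ! i}"
    by (subst length_Cons, subst set_Suc_split) simp
  have "card ((if x \<noteq> y then {0} else {}) \<union> Suc ` {i. i < length xs \<and> xs ! i \<noteq> ys ! i})
      = (if x = y then 0 else 1) + card (Suc ` {i. i < length xs \<and> xs ! i \<noteq> ys ! i})"
    by (auto simp: card_insert_if)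
  also have "card (Suc ` {i. i < length xs \<and> xs ! i \<noteq> ys ! i}) = hdist xs ys"
    using Cons.IH by (simp add: card_image)
  finally show ?case using e by simp
qed

lemma adjacent_hdist: "adjacent xs ys \<longleftrightarrow> length xs = length ys \<and> hdist xs ys = 1"
  unfolding adjacent_def using card_diff by auto

lemma cle_Cons[simp]: "cle (x#xs) (y#ys) \<longleftrightarrow> x \<le> y \<and> cle xs ys"
  by (simp add: cle_def)
lemma cle_Nil[simp]: "cle [] []" by (simp add: cle_def)
lemma cle_len: "cle xs ys \<Longrightarrow> length xs = length ys"
  by (simp add: cle_def list_all2_lengthD)
lemma cle_refl: "cle xs xs" by (simp add: cle_def list_all2_refl)

lemma cle_hdist: "cle u v \<Longrightarrow> hdist u v + ntrue u = ntrue v"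
proof -
  assume "cle u v"
  then have "length u = length v" by (rule cle_len)
  then show ?thesis using \<open>cle u v\<close>
    by (induction u v rule: list_induct2) (auto simp: ntrue_def)
qed

lemma hdist_app: "hdist (xs @ us) (xs @ vs) = hdist us vs"
  by (induction xs) auto

lemma hdist_same: "hdist xs xs = 0"
  by (induction xs) auto

lemma cle_app: "cle (xs @ us) (xs @ vs) \<longleftrightarrow> cle us vs"
  by (induction xs) auto

lemma cle_rep: "cle (replicate n False) (replicate n False)" by (rule cle_refl)

definition chain :: "nat \<Rightarrow> nat \<Rightarrow> bool list" where
  "chain p j = replicate j True @ replicate (p - j) False"

lemma chain_cube: "j \<le> p \<Longrightarrow> chain p j \<in> cube p"
  by (simp add: chain_def cube_def)

lemma chain_step:
  assumes "j < p"
  shows "cless (chain p j) (chain p (Suc j)) \<and> adjacent (chain p j) (chain p (Suc j))"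
proof -
  have a: "chain p j = replicate j True @ False # replicate (p - Suc j) False"
    using assms by (simp add: chain_def Suc_diff_Suc[symmetric])
  have b: "chain p (Suc j) = replicate j True @ True # replicate (p - Suc j) False"
    by (simp add: chain_def replicate_append_same[symmetric])
  show ?thesis unfolding a b cless_def adjacent_hdist
    by (simp add: cle_app hdist_app hdist_same cle_refl)
qed

lemma ahom_cube: "g \<in> ahom p n \<Longrightarrow> x \<in> cube p \<Longrightarrow> g x \<in> cube n"
  by (auto simp: ahom_def)

lemma ahom_mono: "g \<in> ahom p n \<Longrightarrow> x \<in> cube p \<Longrightarrow> y \<in> cube p \<Longrightarrow> cle x y \<Longrightarrow> cle (g x) (g y)"
  by (cases "x = y") (auto simp: ahom_def cless_def cle_refl)

lemma chain_count:
  assumes g: "g \<in> ahom p n"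
  shows "j \<le> p \<Longrightarrow> ntrue (g (chain p j)) = ntrue (g (chain p 0)) + j"
proof (induction j)
  case 0 then show ?case by simp
next
  case (Suc j)
  then have jp: "j < p" by simp
  from chain_step[OF jp] have s: "cless (chain p j) (chain p (Suc j))" "adjacent (chain p j) (chain p (Suc j))" by auto
  have c1: "chain p j \<in> cube p" "chain p (Suc j) \<in> cube p" using jp chain_cube by auto
  have "cless (g (chain p j)) (g (chain p (Suc j)))" "adjacent (g (chain p j)) (g (chain p (Suc j)))"
    using g s c1 unfolding ahom_def by blast+
  then have "hdist (g (chain p j)) (g (chain p (Suc j))) + ntrue (g (chain p j)) = ntrue (g (chain p (Suc j)))"
     "hdist (g (chain p j)) (g (chain p (Suc j))) = 1"
    using cle_hdist cless_def adjacent_hdist by (metis, metis)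
  then show ?case using Suc by simp
qed

fun pat :: "bool list \<Rightarrow> bool list \<Rightarrow> bool option list" where
  "pat (x#xs) (y#ys) = (if x = y then Some x else None) # pat xs ys"
| "pat _ _ = []"

definition nn :: "bool option list \<Rightarrow> nat" where "nn ps = length (filter (\<lambda>x. x = None) ps)"

fun emb :: "bool option list \<Rightarrow> bool list \<Rightarrow> bool list" where
  "emb [] xs = []"
| "emb (Some a # ps) xs = a # emb ps xs"
| "emb (None # ps) xs = hd xs # emb ps (tl xs)"

fun proj :: "bool option list \<Rightarrow> bool list \<Rightarrow> bool list" where
  "proj [] ys = []"
| "proj (Some a # ps) ys = proj ps (tl ys)"
| "proj (None # ps) ys = hd ys # proj ps (tl ys)"

fun fits :: "bool option list \<Rightarrow> bool list \<Rightarrow> bool" where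
  "fits [] [] = True"
| "fits (Some a # ps) (y # ys) = (y = a \<and> fits ps ys)"
| "fits (None # ps) (y # ys) = fits ps ys"
| "fits _ _ = False"

lemma pat_props: "length a = length b \<Longrightarrow> nn (pat a b) = hdist a b \<and> length (pat a b) = length a"
  by (induction a b rule: list_induct2) (auto simp: nn_def)

lemma pat_fits: "cle a z \<Longrightarrow> cle z b \<Longrightarrow> fits (pat a b) z"
proof -
  assume h: "cle a z" "cle z b"
  then have "length a = length z" "length z = length b" using cle_len by auto
  then show ?thesis using h
    by (induction a z b rule: list_induct3) (auto simp: le_bool_def)
qed

lemma emb_len: "length xs = nn ps \<Longrightarrow> length (emb ps xs) = length ps"
  by (induction ps xs rule: emb.induct) (auto simp: nn_def)

lemma proj_emb: "length xs = nn ps \<Longrightarrow> proj ps (emb ps xs) = xs"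
  by (induction ps xs rule: emb.induct) (auto simp: nn_def length_Suc_conv)

lemma emb_proj: "fits ps ys \<Longrightarrow> emb ps (proj ps ys) = ys \<and> length (proj ps ys) = nn ps"
  by (induction ps ys rule: fits.induct) (auto simp: nn_def)

lemma emb_cle: "length u = nn ps \<Longrightarrow> length v = nn ps \<Longrightarrow> cle (emb ps u) (emb ps v) \<longleftrightarrow> cle u v"
proof (induction ps arbitrary: u v)
  case Nil then show ?case by (simp add: nn_def)
next
  case (Cons q ps) then show ?case
    by (cases q) (auto simp: nn_def length_Suc_conv)
qed

lemma emb_eq: "length u = nn ps \<Longrightarrow> length v = nn ps \<Longrightarrow> emb ps u = emb ps v \<longleftrightarrow> u = v"
  by (metis proj_emb)

lemma emb_hdist: "length u = nn ps \<Longrightarrow> length v = nn ps \<Longrightarrow> hdist (emb ps u) (emb ps v) = hdist u v"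
proof (induction ps arbitrary: u v)
  case Nil then show ?case by (simp add: nn_def)
next
  case (Cons q ps) then show ?case
    by (cases q) (auto simp: nn_def length_Suc_conv)
qed


definition lift :: "nat \<Rightarrow> (bool list \<Rightarrow> bool list) \<Rightarrow> bool list \<Rightarrow> bool list" where
  "lift m f = restrict (\<lambda>xs. hd xs # f (tl xs)) (cube (Suc m))"

lemma box_cube: "is_box_hom m k f \<Longrightarrow> xs \<in> cube m \<Longrightarrow> f xs \<in> cube k"
  by (induction arbitrary: xs rule: is_box_hom.induct)
     (auto simp: idc_def face_def compc_def cube_def)

lemma cube_Suc: "xs \<in> cube (Suc m) \<longleftrightarrow> (\<exists>y ys. xs = y # ys \<and> ys \<in> cube m)"
  by (auto simp: cube_def length_Suc_conv)

lemma lift_box: "is_box_hom m k f \<Longrightarrow> is_box_hom (Suc m) (Suc k) (lift m f)"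
proof (induction rule: is_box_hom.induct)
  case (1 n)
  have "lift n (idc n) = idc (Suc n)"
    by (rule ext) (auto simp: lift_def idc_def cube_Suc)
  then show ?case by (metis is_box_hom.intros(1))
next
  case (2 i m \<alpha>)
  have "lift m (face m i \<alpha>) = face (Suc m) (Suc i) \<alpha>"
    by (rule ext) (auto simp: lift_def face_def cube_Suc)
  then show ?case using 2 by (metis is_box_hom.intros(2) Suc_le_mono)
next
  case (3 m k f n g)
  have "lift m (compc m g f) = compc (Suc m) (lift k g) (lift m f)"
  proof (rule ext)
    fix xs show "lift m (compc m g f) xs = compc (Suc m) (lift k g) (lift m f) xs"
      using box_cube[OF 3(1)] by (auto simp: lift_def compc_def cube_Suc)
  qed
  then show ?case using 3 by (metis is_box_hom.intros(3))
qed

lemma emb_box: "is_box_hom (nn ps) (length ps) (restrict (emb ps) (cube (nn ps)))"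
proof (induction ps)
  case Nil
  have "restrict (emb []) (cube (nn [])) = idc 0"
    by (rule ext) (auto simp: idc_def cube_def nn_def)
  then show ?case using is_box_hom.intros(1)[of 0] by (simp add: nn_def del: emb.simps)
next
  case (Cons q ps)
  show ?case
  proof (cases q)
    case None
    have e: "restrict (emb (q#ps)) (cube (nn (q#ps))) = lift (nn ps) (restrict (emb ps) (cube (nn ps)))"
      by (rule ext) (auto simp: None lift_def nn_def cube_Suc)
    have n: "nn (q#ps) = Suc (nn ps)" by (simp add: None nn_def)
    show ?thesis using lift_box[OF Cons] unfolding e n[symmetric] by (simp only: length_Cons)
  next
    case (Some a)
    have n: "nn (q#ps) = nn ps" by (simp add: Some nn_def)
    have e: "restrict (emb (q#ps)) (cube (nn ps)) = compc (nn ps) (face (length ps) 0 a) (restrict (emb ps) (cube (nn ps)))"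
      by (rule ext) (auto simp: Some compc_def face_def nn_def cube_def emb_len)
    have "is_box_hom (length ps) (Suc (length ps)) (face (length ps) 0 a)"
      by (rule is_box_hom.intros(2)) simp
    from is_box_hom.intros(3)[OF Cons this] show ?thesis unfolding e n by (simp only: length_Cons)
  qed
qed

lemma factor:
  assumes g: "g \<in> ahom p n"
  shows "\<exists>f \<mu>. f \<in> box_hom p n \<and> \<mu> \<in> ahom p p \<and> g = compc p f \<mu>"
proof -
  define a where "a = g (chain p 0)"
  define b where "b = g (chain p p)"
  have ca: "chain p 0 \<in> cube p" "chain p p \<in> cube p" by (auto intro: chain_cube)
  have la: "length a = n" "length b = n" using ahom_cube[OF g] ca by (auto simp: a_def b_def cube_def)
  have cab: "cle (chain p 0) (chain p p)" by (simp add: chain_def cle_def list_all2_conv_all_nth)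
  have "cle a b" using ahom_mono[OF g ca cab] by (simp add: a_def b_def)
  then have "hdist a b + ntrue a = ntrue b" by (rule cle_hdist)
  moreover have "ntrue b = ntrue a + p" using chain_count[OF g, of p] by (simp add: a_def b_def)
  ultimately have hd: "hdist a b = p" by simp
  define ps where "ps = pat a b"
  have nps: "nn ps = p" "length ps = n" using pat_props[OF la(1)[folded la(2)]] hd la by (auto simp: ps_def)
  have fit: "fits ps (g x)" if "x \<in> cube p" for x
  proof -
    have c1: "cle (chain p 0) x" "cle x (chain p p)" using that
      by (auto simp: chain_def cle_def list_all2_conv_all_nth cube_def)
    show ?thesis unfolding ps_def
      using ahom_mono[OF g ca(1) that c1(1)] ahom_mono[OF g that ca(2) c1(2)]
      by (intro pat_fits) (simp_all add: a_def b_def)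
  qed
  define f where "f = restrict (emb ps) (cube p)"
  define \<mu> where "\<mu> = restrict (\<lambda>x. proj ps (g x)) (cube p)"
  have key: "g x = emb ps (\<mu> x) \<and> length (\<mu> x) = p" if "x \<in> cube p" for x
    using emb_proj[OF fit[OF that]] that nps by (simp add: \<mu>_def)
  have fb: "f \<in> box_hom p n" using emb_box[of ps] nps by (simp add: f_def box_hom_def)
  have mc: "\<mu> x \<in> cube p" if "x \<in> cube p" for x using key[OF that] by (simp add: cube_def)
  have gext: "g x = undefined" if "x \<notin> cube p" for x using g that by (auto simp: ahom_def)
  have "g = compc p f \<mu>"
  proof (rule ext)
    fix x show "g x = compc p f \<mu> x"
      by (cases "x \<in> cube p") (use key mc gext in \<open>auto simp: compc_def f_def\<close>)
  qed
  moreover have "\<mu> \<in> ahom p p"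
    unfolding ahom_def
  proof (intro CollectI conjI ballI impI)
    show "\<mu> \<in> cube p \<rightarrow>\<^sub>E cube p" using mc by (auto simp: \<mu>_def)
  next
    fix x y assume xy: "x \<in> cube p" "y \<in> cube p" "cless x y"
    then have "cless (g x) (g y)" using g by (auto simp: ahom_def)
    then show "cless (\<mu> x) (\<mu> y)" using key[OF xy(1)] key[OF xy(2)] nps
      by (simp add: cless_def emb_cle emb_eq)
  next
    fix x y assume xy: "x \<in> cube p" "y \<in> cube p" "adjacent x y"
    then have "adjacent (g x) (g y)" using g by (auto simp: ahom_def)
    then show "adjacent (\<mu> x) (\<mu> y)" using key[OF xy(1)] key[OF xy(2)] nps
      by (simp add: adjacent_hdist emb_hdist)
  qed
  ultimately show ?thesis using fb by blast
qed


lemma compc_ahom: "g \<in> ahom p m \<Longrightarrow> \<mu> \<in> ahom p p \<Longrightarrow> compc p g \<mu> \<in> ahom p m"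
  unfolding ahom_def compc_def by (auto simp: PiE_def Pi_def)

lemma compc_assoc: "\<mu> \<in> ahom p p \<Longrightarrow> compc p (compc p f g) \<mu> = compc p f (compc p g \<mu>)"
  by (rule ext) (auto simp: compc_def ahom_def)

lemma idc_ahom: "idc p \<in> ahom p p"
  unfolding ahom_def idc_def by auto

lemma compc_idc: "\<mu> \<in> ahom p p \<Longrightarrow> compc p (idc p) \<mu> = \<mu>"
  by (rule ext) (auto simp: compc_def idc_def ahom_def)

definition hmap :: "nat \<Rightarrow> (bool list \<Rightarrow> bool list) \<Rightarrow> nat \<times> 'a \<times> (bool list \<Rightarrow> bool list) \<Rightarrow> nat \<times> 'a \<times> (bool list \<Rightarrow> bool list)" where
  "hmap p \<mu> z = (fst z, fst (snd z), compc p (snd (snd z)) \<mu>)"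

lemma Lstep_map: "(u, v) \<in> Lstep C act p \<Longrightarrow> \<mu> \<in> ahom p p \<Longrightarrow> (hmap p \<mu> u, hmap p \<mu> v) \<in> Lstep C act p"
  unfolding Lstep_def hmap_def
  by (auto simp: compc_assoc intro!: compc_ahom)

lemma Lequiv_map:
  assumes "(u, v) \<in> Lequiv C act p" "\<mu> \<in> ahom p p"
  shows "(hmap p \<mu> u, hmap p \<mu> v) \<in> Lequiv C act p"
proof -
  let ?S = "Lstep C act p \<union> (Lstep C act p)\<inverse>"
  have s: "(hmap p \<mu> a, hmap p \<mu> b) \<in> ?S" if "(a, b) \<in> ?S" for a b
    using that Lstep_map[OF _ assms(2)] by blast
  have t: "(hmap p \<mu> u, hmap p \<mu> v) \<in> ?S\<^sup>+" if "(u, v) \<in> ?S\<^sup>+"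
    using that
  proof (induction rule: trancl_induct)
    case (base y) then show ?case using s by blast
  next
    case (step y z) then show ?case using s by (meson trancl.trancl_into_trancl)
  qed
  show ?thesis using assms(1)
  proof (cases "(u, v) \<in> Id_on (Lpre C p)")
    case True
    then have "hmap p \<mu> u \<in> Lpre C p" "u = v"
      using compc_ahom[OF _ assms(2)] by (auto simp: Lpre_def hmap_def)
    then show ?thesis by (auto simp: Lequiv_def)
  next
    case False
    then show ?thesis using assms(1) t by (auto simp: Lequiv_def)
  qed
qed

lemma Lequiv_sym: "sym (Lequiv C act p)"
  unfolding Lequiv_def
  by (intro sym_Un sym_Id_on sym_trancl sym_Un_converse)

lemma Lequiv_trans: "trans (Lequiv C act p)"
  unfolding Lequiv_def trans_def by (auto intro: trancl_trans)

lemma Lequiv_class: "(u, v) \<in> Lequiv C act p \<Longrightarrow> Lequiv C act p `` {u} = Lequiv C act p `` {v}"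
  using Lequiv_sym Lequiv_trans unfolding sym_def trans_def by blast

theorem proposition8p3:
  fixes C :: "nat \<Rightarrow> 'a set"
    and act :: "nat \<Rightarrow> nat \<Rightarrow> (bool list \<Rightarrow> bool list) \<Rightarrow> 'a \<Rightarrow> 'a"
    and p :: nat
    and x :: "(nat \<times> 'a \<times> (bool list \<Rightarrow> bool list)) set"
  assumes "precubical C act"
    and "x \<in> Lcells C act p"
  shows "\<exists>y \<in> C p. \<exists>\<mu> \<in> ahom p p. x = Lmap C act p p \<mu> (Lunit C act p y)"
proof -
  obtain z where z: "z \<in> Lpre C p" and xz: "x = Lequiv C act p `` {z}"
    using assms(2) unfolding Lcells_def by (auto elim: quotientE)
  obtain n k g where zz: "z = (n, k, g)" by (cases z) auto
  have k: "k \<in> C n" and g: "g \<in> ahom p n" using z zz by (auto simp: Lpre_def)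
  obtain f \<mu> where f: "f \<in> box_hom p n" and mu: "\<mu> \<in> ahom p p" and gf: "g = compc p f \<mu>"
    using factor[OF g] by blast
  define y where "y = act p n f k"
  have y: "y \<in> C p" using assms(1) f k unfolding precubical_def y_def by blast
  have "((p, y, \<mu>), (n, k, g)) \<in> Lstep C act p"
    unfolding Lstep_def y_def gf using f k mu by blast
  then have "((p, y, \<mu>), z) \<in> Lequiv C act p" unfolding Lequiv_def zz by blast
  then have x1: "x = Lequiv C act p `` {(p, y, \<mu>)}" using xz Lequiv_class by metis
  have base: "(p, y, idc p) \<in> Lequiv C act p `` {(p, y, idc p)}"
    using y idc_ahom by (auto simp: Lequiv_def Lpre_def)
  have each: "Lequiv C act p `` {(n', k', compc p g' \<mu>)} = Lequiv C act p `` {(p, y, \<mu>)}"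
    if "(n', k', g') \<in> Lequiv C act p `` {(p, y, idc p)}" for n' k' g'
  proof -
    have "((p, y, idc p), (n', k', g')) \<in> Lequiv C act p" using that by simp
    from Lequiv_map[OF this mu] have "((p, y, \<mu>), (n', k', compc p g' \<mu>)) \<in> Lequiv C act p"
      by (simp add: hmap_def compc_idc[OF mu])
    then show ?thesis using Lequiv_class by metis
  qed
  have "Lmap C act p p \<mu> (Lunit C act p y) = Lequiv C act p `` {(p, y, \<mu>)}"
    unfolding Lmap_def Lunit_def
  proof
    show "(\<Union>(n, k, g)\<in>Lequiv C act p `` {(p, y, idc p)}. Lequiv C act p `` {(n, k, compc p g \<mu>)})
        \<subseteq> Lequiv C act p `` {(p, y, \<mu>)}"
      using each by fastforce
    show "Lequiv C act p `` {(p, y, \<mu>)} \<subseteq> (\<Union>(n, k, g)\<in>Lequiv C act p `` {(p, y, idc p)}. Lequiv C act p `` {(n, k, compc p g \<mu>)})"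
      using base compc_idc[OF mu] by (force simp del: Image_singleton_iff)
  qed
  then show ?thesis using x1 y mu by blast
qed

end
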